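(* Let $(Q,\bullet)$ be a left-non-degenerate weak co-RC-system on a quiver $Q$ over $\Lambda$. Then its completion $(\hat Q,\hat\bullet)$ is a weak co-RC-system.
   Context: A weak co-RC-system $(Q,\bullet)$ is a quiver with a partial binary operation such that: $x\bullet y$ is defined only if $\mathfrak{t}(x)=\mathfrak{t}(y)$; whenever $x\bullet y$ is defined, $y\bullet x$ is defined, $\mathfrak{t}(x\bullet y)=\mathfrak{s}(x)$, $\mathfrak{t}(y\bullet x)=\mathfrak{s}(y)$, $\mathfrak{s}(x\bullet y)=\mathfrak{s}(y\bullet x)$; and whenever $x\bullet y$, $x\bullet z$, $(x\bullet y)\bullet(x\bullet z)$ are defined, $y\bullet z$ and $(y\bullet x)\bullet(y\bullet z)$ are defined and $(x\bullet y)\bullet(x\bullet z)=(y\bullet x)\bullet(y\bullet z)$. Left-non-degenerate: each $x\bullet\cdot\colon Q(\Lambda,\mathfrak{t}(x))\to Q(\Lambda,\mathfrak{s}(x))$ is a bijection ($Q(\Lambda,\mu)$ = arrows with target $\mu$). The completion: $\hat Q=Q\cup\{\epsilon_\lambda\mid\lambda\in\Lambda\}$ with new loops $\epsilon_\lambda\colon\lambda\to\lambda$ not in $Q$, and $x\hat\bullet y:=x\bullet y$ for distinct $x,y\in Q$ when defined, $x\hat\bullet x:=\epsilon_{\mathfrak{s}(x)}$, $x\hat\bullet\epsilon_{\mathfrak{t}(x)}:=\epsilon_{\mathfrak{s}(x)}$, $\epsilon_{\mathfrak{t}(x)}\hat\bullet x:=x$. *)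

theory Defs
  imports Main
begin

definition quiver :: "'v set \<Rightarrow> 'a set \<Rightarrow> ('a \<Rightarrow> 'v) \<Rightarrow> ('a \<Rightarrow> 'v) \<Rightarrow> bool" where
  "quiver L Q s t \<longleftrightarrow> (\<forall>x\<in>Q. s x \<in> L \<and> t x \<in> L)"

definition weak_coRC ::
  "'v set \<Rightarrow> 'a set \<Rightarrow> ('a \<Rightarrow> 'v) \<Rightarrow> ('a \<Rightarrow> 'v) \<Rightarrow> ('a \<Rightarrow> 'a \<Rightarrow> 'a option) \<Rightarrow> bool" where
  "weak_coRC L Q s t op \<longleftrightarrow>
     quiver L Q s t \<and>
     \<comment> \<open>partial binary operation on Q\<close>
     (\<forall>x y w. op x y = Some w \<longrightarrow> x \<in> Q \<and> y \<in> Q \<and> w \<in> Q) \<and>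
     \<comment> \<open>x \<bullet> y defined only if t x = t y\<close>
     (\<forall>x y. op x y \<noteq> None \<longrightarrow> t x = t y) \<and>
     \<comment> \<open>second axiom\<close>
     (\<forall>x y a. op x y = Some a \<longrightarrow>
        (\<exists>b. op y x = Some b \<and> t a = s x \<and> t b = s y \<and> s a = s b)) \<and>
     \<comment> \<open>third axiom\<close>
     (\<forall>x y z a b c. op x y = Some a \<longrightarrow> op x z = Some b \<longrightarrow> op a b = Some c \<longrightarrow>
        (\<exists>d e. op y z = Some d \<and> op y x = Some e \<and> op e d = Some c))"

definition left_nondegenerate ::
  "'a set \<Rightarrow> ('a \<Rightarrow> 'v) \<Rightarrow> ('a \<Rightarrow> 'v) \<Rightarrow> ('a \<Rightarrow> 'a \<Rightarrow> 'a option) \<Rightarrow> bool" where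
  "left_nondegenerate Q s t op \<longleftrightarrow>
     (\<forall>x\<in>Q. (\<forall>y\<in>Q. t y = t x \<longrightarrow> op x y \<noteq> None) \<and>
        bij_betw (\<lambda>y. the (op x y)) {y\<in>Q. t y = t x} {z\<in>Q. t z = s x})"

text \<open>Completion: arrows Inl x for x \<in> Q, and new loops \<epsilon>_\<lambda> = Inr \<lambda> for \<lambda> \<in> L.\<close>

definition compl_arrows :: "'v set \<Rightarrow> 'a set \<Rightarrow> ('a + 'v) set" where
  "compl_arrows L Q = Inl ` Q \<union> Inr ` L"

fun compl_src :: "('a \<Rightarrow> 'v) \<Rightarrow> ('a + 'v) \<Rightarrow> 'v" where
  "compl_src s (Inl x) = s x"
| "compl_src s (Inr l) = l"

fun compl_op ::
  "'v set \<Rightarrow> 'a set \<Rightarrow> ('a \<Rightarrow> 'v) \<Rightarrow> ('a \<Rightarrow> 'v) \<Rightarrow> ('a \<Rightarrow> 'a \<Rightarrow> 'a option)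
     \<Rightarrow> ('a + 'v) \<Rightarrow> ('a + 'v) \<Rightarrow> ('a + 'v) option" where
  "compl_op L Q s t op (Inl x) (Inl y) =
     (if x \<in> Q \<and> y \<in> Q then
        (if x = y then Some (Inr (s x)) else map_option Inl (op x y))
      else None)"
| "compl_op L Q s t op (Inl x) (Inr l) =
     (if x \<in> Q \<and> l = t x then Some (Inr (s x)) else None)"
| "compl_op L Q s t op (Inr l) (Inl x) =
     (if x \<in> Q \<and> l = t x then Some (Inl x) else None)"
| "compl_op L Q s t op (Inr l) (Inr m) =
     (if l \<in> L \<and> l = m then Some (Inr l) else None)"

end

theory Submission
  imports Defs
begin

theorem lemma3p9:
  fixes L :: "'v set" and Q :: "'a set" and s t :: "'a \<Rightarrow> 'v"
    and op :: "'a \<Rightarrow> 'a \<Rightarrow> 'a option"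
  assumes "weak_coRC L Q s t op"
    and "left_nondegenerate Q s t op"
  shows "weak_coRC L (compl_arrows L Q) (compl_src s) (compl_src t) (compl_op L Q s t op)"
proof -
  have qv: "\<forall>x\<in>Q. s x \<in> L \<and> t x \<in> L" using assms(1) unfolding weak_coRC_def quiver_def by blast
  have cl: "\<And>x y w. op x y = Some w \<Longrightarrow> x \<in> Q \<and> y \<in> Q \<and> w \<in> Q" using assms(1) unfolding weak_coRC_def by blast
  have tt: "\<And>x y w. op x y = Some w \<Longrightarrow> t x = t y" using assms(1) unfolding weak_coRC_def by blast
  have ax2: "\<And>x y a. op x y = Some a \<Longrightarrow>
        (\<exists>b. op y x = Some b \<and> t a = s x \<and> t b = s y \<and> s a = s b)" using assms(1) unfolding weak_coRC_def by blast
  have ax3: "\<And>x y z a b c. op x y = Some a \<Longrightarrow> op x z = Some b \<Longrightarrow> op a b = Some c \<Longrightarrow>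
        (\<exists>d e. op y z = Some d \<and> op y x = Some e \<and> op e d = Some c)" using assms(1) unfolding weak_coRC_def by blast
  have inj: "\<And>x y z. x \<in> Q \<Longrightarrow> y \<in> Q \<Longrightarrow> z \<in> Q \<Longrightarrow> t y = t x \<Longrightarrow> t z = t x \<Longrightarrow> op x y = op x z \<Longrightarrow> y = z"
  proof -
    fix x y z assume h: "x \<in> Q" "y \<in> Q" "z \<in> Q" "t y = t x" "t z = t x" "op x y = op x z"
    have "inj_on (\<lambda>y. the (op x y)) {y\<in>Q. t y = t x}"
      using assms(2) h(1) unfolding left_nondegenerate_def bij_betw_def by blast
    then show "y = z" using h unfolding inj_on_def by auto
  qed
  let ?o = "compl_op L Q s t op"
  have P1: "quiver L (compl_arrows L Q) (compl_src s) (compl_src t)"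
    using qv unfolding quiver_def compl_arrows_def by auto
  have P2: "\<forall>x y w. ?o x y = Some w \<longrightarrow> x \<in> compl_arrows L Q \<and> y \<in> compl_arrows L Q \<and> w \<in> compl_arrows L Q"
  proof (intro allI impI)
    fix x y w assume "?o x y = Some w"
    then show "x \<in> compl_arrows L Q \<and> y \<in> compl_arrows L Q \<and> w \<in> compl_arrows L Q"
      unfolding compl_arrows_def
      by (cases x; cases y) (auto simp: qv split: if_splits dest: cl)
  qed
  have P3: "\<forall>x y. ?o x y \<noteq> None \<longrightarrow> compl_src t x = compl_src t y"
  proof (intro allI impI)
    fix x y assume "?o x y \<noteq> None"
    then show "compl_src t x = compl_src t y"
      by (cases x; cases y) (auto split: if_splits dest: tt)
  qed
  have P4: "\<forall>x y a. ?o x y = Some a \<longrightarrow> (\<exists>b. ?o y x = Some b \<and> compl_src t a = compl_src s x \<and>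
       compl_src t b = compl_src s y \<and> compl_src s a = compl_src s b)"
  proof (intro allI impI)
    fix x y a assume "?o x y = Some a"
    then show "\<exists>b. ?o y x = Some b \<and> compl_src t a = compl_src s x \<and>
       compl_src t b = compl_src s y \<and> compl_src s a = compl_src s b"
      by (cases x; cases y) (auto split: if_splits dest: ax2 cl)
  qed
  have P5: "\<forall>x y z a b c. ?o x y = Some a \<longrightarrow> ?o x z = Some b \<longrightarrow> ?o a b = Some c \<longrightarrow>
        (\<exists>d e. ?o y z = Some d \<and> ?o y x = Some e \<and> ?o e d = Some c)"
  proof (intro allI impI)
    fix x y z a b c
    assume h: "?o x y = Some a" "?o x z = Some b" "?o a b = Some c"
    show "\<exists>d e. ?o y z = Some d \<and> ?o y x = Some e \<and> ?o e d = Some c"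
      using h
      apply (cases x; cases y; cases z)
      apply (auto split: if_splits simp: qv dest: cl tt ax2)
      subgoal for aa ab za using ax2[of ab aa za] by (auto dest: cl)
      subgoal for aa ab za using ax2[of aa ab za] by (auto dest: cl)
      subgoal for aa aaa ab za using inj[of aa aaa ab] tt[of aa aaa] tt[of aa ab] by auto
      subgoal for aa aaa ab za zaa zb
      proof -
        assume H: "aa \<in> Q" "aaa \<in> Q" "ab \<in> Q" "aa \<noteq> ab" "op aa aaa = Some za"
          "op aa ab = Some zaa" "op za zaa = Some zb"
        obtain d e where de: "op aaa ab = Some d" "op aaa aa = Some e" "op e d = Some zb"
          using ax3[OF H(5,6,7)] by blast
        have "t aaa = t aa" "t ab = t aa" using tt[OF H(5)] tt[OF H(6)] by auto
        then have "e \<noteq> d" using inj[of aaa aa ab] H de by auto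
        then show ?thesis using de cl[OF de(1)] cl[OF de(2)] by auto
      qed
      subgoal for aa aaa za using ax2[of aa aaa za] by (auto dest: cl)
      subgoal for aa aaa za using cl by blast
      subgoal for aa aaa za using ax2[of aa aaa za] by auto
      done
  qed
  show ?thesis unfolding weak_coRC_def using P1 P2 P3 P4 P5 by blast
qed

end
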